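(* Let $p\ge2$, $f\in\mathcal H_0$, $u$ the solution of $\partial_tu+\partial J(u)\ni0$, $u(0)=f$, and $\Lambda(t):=pJ(u(t))/\|u(t)\|^p$. Then for all $\delta>0$ and $t\ge\delta$: $$\|u(t)\|^2\ge\|u(\delta)\|^2\exp(-2\Lambda(\delta)(t-\delta))\quad\text{if }p=2,$$ $$\|u(t)\|^{p-2}\ge\frac{1}{\|u(\delta)\|^{2-p}+(p-2)\Lambda(\delta)(t-\delta)}\quad\text{if }p>2,$$ and $\delta=0$ is admissible if $J(f)<\infty$.
   Context: $\mathcal H$ is a real Hilbert space with inner product $\langle\cdot,\cdot\rangle$ and norm $\|\cdot\|$. $J:\mathcal H\to\mathbb R\cup\{\infty\}$ is convex, lower semicontinuous, proper, with dense effective domain, and absolutely $p$-homogeneous: $J(cu)=|c|^pJ(u)$ for $c\ne0$, $J(0)=0$. Standing coercivity assumption: $\lambda_1:=\inf_{u\in\mathcal H_0}pJ(u)/\|u\|^p>0$. $\partial J(u)=\{\zeta: J(u)+\langle\zeta,v-u\rangle\le J(v)\ \forall v\}$; $\mathcal N(J)=\{u:J(u)=0\}$; $\mathcal H_0:=\mathcal N(J)^\perp\setminus\{0\}$. The gradient flow solution (Brezis) is the unique continuous $u:[0,\infty)\to\mathcal H$, Lipschitz on $[\delta,\infty)$ for all $\delta>0$, right-differentiable on $(0,\infty)$ with $u(0)=f$ and $\partial_t^+u(t)=-\zeta(t)$, $\zeta(t)$ the minimal-norm element of $\partial J(u(t))$. (For $p\ge2$ one has $u(t)\neq0$ for all $t$,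 so $\Lambda$ is defined for all $t\ge0$, possibly $+\infty$ at $t=0$.) *)

theory Defs
  imports "HOL-Analysis.Analysis"
begin

text \<open>Functionals J : H -> R \<union> {\<infinity>} are modelled as maps into ereal
  (properness excludes the value -\<infinity>).\<close>

definition convex_functional :: "('a::real_vector \<Rightarrow> ereal) \<Rightarrow> bool" where
  "convex_functional J \<longleftrightarrow>
     (\<forall>x y (\<theta>::real). 0 \<le> \<theta> \<and> \<theta> \<le> 1 \<longrightarrow>
        J (\<theta> *\<^sub>R x + (1 - \<theta>) *\<^sub>R y) \<le> ereal \<theta> * J x + ereal (1 - \<theta>) * J y)"

definition lsc_functional :: "('a::topological_space \<Rightarrow> ereal) \<Rightarrow> bool" where
  "lsc_functional J \<longleftrightarrow> (\<forall>x. J x \<le> Liminf (at x) J)"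

definition proper_functional :: "('a \<Rightarrow> ereal) \<Rightarrow> bool" where
  "proper_functional J \<longleftrightarrow> (\<forall>x. J x \<noteq> -\<infinity>) \<and> (\<exists>x. J x \<noteq> \<infinity>)"

definition eff_dom :: "('a \<Rightarrow> ereal) \<Rightarrow> 'a set" where
  "eff_dom J = {x. J x < \<infinity>}"

definition abs_homogeneous :: "real \<Rightarrow> ('a::real_vector \<Rightarrow> ereal) \<Rightarrow> bool" where
  "abs_homogeneous p J \<longleftrightarrow>
     (\<forall>c u. c \<noteq> 0 \<longrightarrow> J (c *\<^sub>R u) = ereal (\<bar>c\<bar> powr p) * J u) \<and> J 0 = 0"

definition null_set :: "('a \<Rightarrow> ereal) \<Rightarrow> 'a set" where
  "null_set J = {u. J u = 0}"

definition H0 :: "('a::real_inner \<Rightarrow> ereal) \<Rightarrow> 'a set" where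
  "H0 J = {u. \<forall>v\<in>null_set J. inner u v = 0} - {0}"

definition lambda1 :: "real \<Rightarrow> ('a::real_inner \<Rightarrow> ereal) \<Rightarrow> ereal" where
  "lambda1 p J = (INF u\<in>H0 J. ereal p * J u / ereal (norm u powr p))"

definition subdiff :: "('a::real_inner \<Rightarrow> ereal) \<Rightarrow> 'a \<Rightarrow> 'a set" where
  "subdiff J u = {\<zeta>. \<forall>v. J u + ereal (inner \<zeta> (v - u)) \<le> J v}"

definition min_norm_elem :: "'a::real_normed_vector set \<Rightarrow> 'a \<Rightarrow> bool" where
  "min_norm_elem S \<zeta> \<longleftrightarrow> \<zeta> \<in> S \<and> (\<forall>\<xi>\<in>S. norm \<zeta> \<le> norm \<xi>)"

text \<open>Brezis gradient flow solution of u' + \<partial>J(u) \<ni> 0, u(0) = f.\<close>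
definition gradient_flow :: "('a::real_inner \<Rightarrow> ereal) \<Rightarrow> 'a \<Rightarrow> (real \<Rightarrow> 'a) \<Rightarrow> bool" where
  "gradient_flow J f u \<longleftrightarrow>
     continuous_on {0..} u \<and>
     (\<forall>\<delta>>0. \<exists>C. C-lipschitz_on {\<delta>..} u) \<and>
     u 0 = f \<and>
     (\<forall>t>0. \<exists>\<zeta>. min_norm_elem (subdiff J (u t)) \<zeta> \<and>
                 (u has_vector_derivative (- \<zeta>)) (at t within {t..}))"

definition rayleigh :: "real \<Rightarrow> ('a::real_normed_vector \<Rightarrow> ereal) \<Rightarrow> (real \<Rightarrow> 'a) \<Rightarrow> real \<Rightarrow> real" where
  "rayleigh p J u t = p * real_of_ereal (J (u t)) / norm (u t) powr p"

end

theory Submission imports Defs begin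

lemma dini_mono:
  fixes G :: "real \<Rightarrow> real" and a b :: real
  assumes ab: "a \<le> b"
    and lsc: "\<And>x y. x \<in> {a..b} \<Longrightarrow> y < G x \<Longrightarrow> \<forall>\<^sub>F s in at x within {a..b}. y < G s"
    and rd: "\<And>x e. x \<in> {a..<b} \<Longrightarrow> e > 0 \<Longrightarrow> \<forall>\<^sub>F s in at_right x. G s \<le> G x + e * (s - x)"
  shows "G b \<le> G a"
proof (rule field_le_epsilon)
  fix e0 :: real assume e0: "0 < e0"
  define e where "e = e0 / (b - a + 1)"
  have e: "e > 0" using e0 ab by (simp add: e_def)
  define S where "S = {s \<in> {a..b}. G s \<le> G a + e * (s - a)}"
  have aS: "a \<in> S" using ab by (simp add: S_def)
  have bdd: "bdd_above S" by (auto simp: S_def bdd_above_def)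
  define m where "m = Sup S"
  have am: "a \<le> m" using aS bdd by (simp add: m_def cSup_upper)
  have mb: "m \<le> b" unfolding m_def using aS by (intro cSup_least) (auto simp: S_def)
  have mS: "m \<in> S"
  proof (rule ccontr)
    assume nm: "m \<notin> S"
    hence gt: "G m > G a + e*(m-a)" using am mb by (auto simp: S_def)
    from lsc[OF _ gt] am mb obtain d where d: "d>0"
      "\<forall>s\<in>{a..b}. s \<noteq> m \<and> dist s m < d \<longrightarrow> G a + e*(m-a) < G s"
      by (auto simp: eventually_at)
    have "m - d < Sup S" using d by (simp add: m_def)
    then obtain s where s: "s \<in> S" "m - d < s" using less_cSup_iff[of S] aS bdd by blast
    have "s \<le> m" using s bdd by (simp add: m_def cSup_upper)
    moreover have "s \<noteq> m" using s nm by auto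
    ultimately have "G a + e*(m-a) < G s" using d s by (auto simp: S_def dist_real_def)
    moreover have "G s \<le> G a + e*(s-a)" using s by (auto simp: S_def)
    moreover have "e*(s-a) \<le> e*(m-a)" using \<open>s \<le> m\<close> e by simp
    ultimately show False by linarith
  qed
  have mb': "m = b"
  proof (rule ccontr)
    assume "m \<noteq> b" hence mb2: "m < b" using mb by simp
    have "\<forall>\<^sub>F s in at_right m. G s \<le> G m + e * (s - m)" using rd[OF _ e] am mb2 by auto
    then obtain b' where b': "b' > m" "\<And>y. y > m \<Longrightarrow> y < b' \<Longrightarrow> G y \<le> G m + e * (y - m)"
      by (auto simp: eventually_at_right_field)
    define s where "s = (m + min b b') / 2"
    have s1: "m < s" "s < b'" "s \<le> b" using b' mb2 by (auto simp: s_def)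
    have "G s \<le> G m + e * (s - m)" using b' s1 by auto
    also have "\<dots> \<le> G a + e*(m-a) + e*(s-m)" using mS by (auto simp: S_def)
    finally have "s \<in> S" using s1 am by (auto simp: S_def algebra_simps)
    hence "s \<le> m" using bdd by (simp add: m_def cSup_upper)
    thus False using s1 by simp
  qed
  have "G b \<le> G a + e * (b - a)" using mS mb' by (auto simp: S_def)
  also have "e * (b - a) \<le> e0"
  proof -
    have "e * (b - a) = e0 * ((b-a)/(b-a+1))" by (simp add: e_def)
    also have "\<dots> \<le> e0 * 1" using e0 ab by (intro mult_left_mono) auto
    finally show ?thesis by simp
  qed
  finally show "G b \<le> G a + e0" by simp
qed

lemma rd_helper:
  fixes G Q :: "real \<Rightarrow> real"
  assumes "(Q \<longlongrightarrow> L) (at_right x)" "L < e" "\<forall>\<^sub>F s in at_right x. G s - G x \<le> (s - x) * Q s"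
  shows "\<forall>\<^sub>F s in at_right x. G s \<le> G x + e * (s - x)"
proof -
  have "\<forall>\<^sub>F s in at_right x. Q s < e" using order_tendstoD(2)[OF assms(1,2)] .
  with assms(3) eventually_at_right_less[of x] show ?thesis
  proof eventually_elim
    case (elim s)
    have "(s - x) * Q s \<le> (s - x) * e" using elim by (intro mult_left_mono) auto
    thus ?case using elim by (simp add: algebra_simps)
  qed
qed

lemma dini_deriv:
  fixes G G' :: "real \<Rightarrow> real"
  assumes ab: "a \<le> b" and cont: "continuous_on {a..b} G"
    and der: "\<And>x. x \<in> {a..<b} \<Longrightarrow> (G has_real_derivative G' x) (at x within {x..})"
    and neg: "\<And>x. x \<in> {a..<b} \<Longrightarrow> G' x \<le> 0"
  shows "G b \<le> G a"
proof (rule dini_mono[OF ab])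
  fix x y assume x: "x \<in> {a..b}" and y: "y < G x"
  have "(G \<longlongrightarrow> G x) (at x within {a..b})" using cont x by (simp add: continuous_on_def)
  thus "\<forall>\<^sub>F s in at x within {a..b}. y < G s" using y by (rule order_tendstoD)
next
  fix x e :: real assume x: "x \<in> {a..<b}" and e: "0 < e"
  have "((\<lambda>y. (G y - G x) / (y - x)) \<longlongrightarrow> G' x) (at_right x)"
    using der[OF x] by (simp add: has_field_derivative_iff at_within_Ici_at_right)
  moreover have "G' x < e" using neg[OF x] e by simp
  moreover have "\<forall>\<^sub>F s in at_right x. G s - G x \<le> (s - x) * ((G s - G x) / (s - x))"
    using eventually_at_right_less[of x] by eventually_elim simp
  ultimately show "\<forall>\<^sub>F s in at_right x. G s \<le> G x + e * (s - x)" by (rule rd_helper)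
qed

lemma dini_deriv_open:
  fixes G G' :: "real \<Rightarrow> real"
  assumes ab: "a \<le> b" and cont: "continuous_on {a..b} G"
    and der: "\<And>x. x \<in> {a<..<b} \<Longrightarrow> (G has_real_derivative G' x) (at x within {x..})"
    and neg: "\<And>x. x \<in> {a<..<b} \<Longrightarrow> G' x \<le> 0"
  shows "G b \<le> G a"
proof (cases "a = b")
  case True thus ?thesis by simp
next
  case False hence ab2: "a < b" using ab by simp
  have le: "G b \<le> G c" if c: "c \<in> {a<..<b}" for c
  proof (rule dini_deriv[where G'=G' and G=G and a=c and b=b])
    show "c \<le> b" using c by simp
    show "continuous_on {c..b} G" using c by (intro continuous_on_subset[OF cont]) auto
    show "(G has_real_derivative G' x) (at x within {x..})" if "x \<in> {c..<b}" for x
      using that c by (intro der) auto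
    show "G' x \<le> 0" if "x \<in> {c..<b}" for x
      using that c by (intro neg) auto
  qed
  have "(G \<longlongrightarrow> G a) (at_right a)" using continuous_on_Icc_at_rightD[OF cont ab2] .
  moreover have "\<forall>\<^sub>F c in at_right a. G b \<le> G c"
    using eventually_at_right_real[OF ab2] by eventually_elim (rule le)
  ultimately show ?thesis by (intro tendsto_lowerbound) auto
qed


lemma hom_J: "abs_homogeneous p J \<Longrightarrow> c \<noteq> 0 \<Longrightarrow> J (c *\<^sub>R u) = ereal (\<bar>c\<bar> powr p) * J u"
  by (simp add: abs_homogeneous_def)

lemma J_nonneg:
  assumes conv: "convex_functional J" and hom: "abs_homogeneous p J"
  shows "0 \<le> J x"
proof -
  have J0: "J 0 = 0" using hom by (simp add: abs_homogeneous_def)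
  have Jm: "J (-x) = J x" using hom_J[OF hom, of "-1" x] by simp
  have "J ((1/2) *\<^sub>R x + (1 - 1/2) *\<^sub>R (-x)) \<le> ereal (1/2) * J x + ereal (1 - 1/2) * J (-x)"
    using conv unfolding convex_functional_def by (erule_tac x=x in allE, erule_tac x="-x" in allE,
      erule_tac x="1/2" in allE) simp
  hence "0 \<le> ereal (1/2) * J x + ereal (1/2) * J x" using J0 Jm by simp
  also have "ereal (1/2) * J x + ereal (1/2) * J x = J x" by (cases "J x") auto
  finally show ?thesis .
qed

lemma subdiff_fin:
  assumes "proper_functional J" "\<zeta> \<in> subdiff J x"
  shows "\<exists>a. J x = ereal a"
proof -
  obtain y where y: "J y \<noteq> \<infinity>" using assms(1) by (auto simp: proper_functional_def)
  have "J x + ereal (inner \<zeta> (y - x)) \<le> J y" using assms(2) by (auto simp: subdiff_def)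
  moreover have "J x \<noteq> -\<infinity>" using assms(1) by (auto simp: proper_functional_def)
  ultimately show ?thesis using y by (cases "J x") auto
qed

lemma subgrad_ereal:
  assumes "\<zeta> \<in> subdiff J x" "J x = ereal a"
  shows "ereal (a + inner \<zeta> (v - x)) \<le> J v"
  using assms by (auto simp: subdiff_def)

lemma subgrad_real:
  assumes "\<zeta> \<in> subdiff J x" "J x = ereal a" "J v = ereal b"
  shows "a + inner \<zeta> (v - x) \<le> b"
  using subgrad_ereal[OF assms(1,2), of v] assms(3) by simp

lemma subgrad_mono:
  assumes "\<zeta>1 \<in> subdiff J x1" "J x1 = ereal a1" "\<zeta>2 \<in> subdiff J x2" "J x2 = ereal a2"
  shows "0 \<le> inner (\<zeta>1 - \<zeta>2) (x1 - x2)"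
proof -
  have "a1 + inner \<zeta>1 (x2 - x1) \<le> a2" by (rule subgrad_real[OF assms(1,2,4)])
  moreover have "a2 + inner \<zeta>2 (x1 - x2) \<le> a1" by (rule subgrad_real[OF assms(3,4,2)])
  ultimately show ?thesis by (simp add: inner_diff_left inner_diff_right algebra_simps)
qed

lemma euler:
  assumes hom: "abs_homogeneous p J" and sub: "\<zeta> \<in> subdiff J x" and Jx: "J x = ereal a"
  shows "inner \<zeta> x = p * a"
proof -
  define \<phi> where "\<phi> = (\<lambda>c::real. (c powr p - 1) * a - (c - 1) * inner \<zeta> x)"
  have pos: "\<phi> 1 \<le> \<phi> c" if c: "c > 0" for c
  proof -
    have "J (c *\<^sub>R x) = ereal (c powr p * a)" using hom_J[OF hom, of c x] c Jx by simp
    from subgrad_real[OF sub Jx this] have "a + inner \<zeta> (c *\<^sub>R x - x) \<le> c powr p * a" .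
    thus ?thesis by (simp add: \<phi>_def inner_diff_right algebra_simps)
  qed
  have "(\<phi> has_real_derivative (p * 1 powr (p - 1) * 1) * a - 1 * inner \<zeta> x) (at 1)"
    unfolding \<phi>_def by (auto intro!: derivative_eq_intros)
  from DERIV_local_min[OF this, of 1] pos
  have "(p * 1 powr (p - 1) * 1) * a - 1 * inner \<zeta> x = 0" by auto
  thus ?thesis by simp
qed


lemma parallelogram_mid:
  fixes a b :: "'a::real_inner"
  shows "norm (a - b)^2 = 2 * norm a ^2 + 2 * norm b ^2 - 4 * norm ((1/2) *\<^sub>R (a + b))^2"
  by (simp add: power2_norm_eq_inner inner_add_left inner_add_right inner_diff_left inner_diff_right
        inner_commute algebra_simps)

lemma K_lemma:
  fixes J :: "'a::{real_inner,complete_space} \<Rightarrow> ereal"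
  assumes Jx: "J x = ereal a" and mn: "min_norm_elem (subdiff J x) \<zeta>0" and r: "r > 0"
  shows "\<exists>e>0. \<forall>\<xi> e'. e' < e \<longrightarrow> norm \<xi> \<le> norm \<zeta>0 \<longrightarrow>
            (\<forall>v. ereal (a + inner \<xi> (v - x) - e') \<le> J v) \<longrightarrow> norm (\<xi> - \<zeta>0) < r"
proof -
  define K where "K e = {\<xi>. \<forall>v. ereal (a + inner \<xi> (v - x) - e) \<le> J v}" for e
  define \<rho> where "\<rho> e = Inf (norm ` K e)" for e
  have Kmono: "K e \<subseteq> K e'" if "e \<le> e'" for e e'
  proof
    fix \<xi> assume "\<xi> \<in> K e"
    thus "\<xi> \<in> K e'" unfolding K_def using that
      by (auto intro: order_trans[rotated])
  qed
  have z0sub: "\<zeta>0 \<in> subdiff J x" using mn by (simp add: min_norm_elem_def)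
  have z0K: "\<zeta>0 \<in> K e" if "e \<ge> 0" for e
  proof -
    have "\<zeta>0 \<in> K 0" using subgrad_ereal[OF z0sub Jx] by (simp add: K_def)
    thus ?thesis using Kmono[OF that] by auto
  qed
  have Kmid: "(1/2) *\<^sub>R (\<xi>1 + \<xi>2) \<in> K e" if "\<xi>1 \<in> K e" "\<xi>2 \<in> K e" for \<xi>1 \<xi>2 e
  proof -
    { fix v
      have 1: "ereal (a + inner \<xi>1 (v - x) - e) \<le> J v" and 2: "ereal (a + inner \<xi>2 (v - x) - e) \<le> J v"
        using that by (auto simp: K_def)
      have "ereal (a + inner ((1/2) *\<^sub>R (\<xi>1 + \<xi>2)) (v - x) - e) \<le> J v"
        using 1 2 by (cases "J v") (auto simp: inner_add_left algebra_simps)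
    }
    thus ?thesis by (simp add: K_def)
  qed
  have Kclosed: "y \<in> K e" if lim: "X \<longlonglongrightarrow> y" and ev: "\<forall>n\<ge>N. X n \<in> K e" for X y e and N :: nat
  proof -
    { fix v
      have "ereal (a + inner y (v - x) - e) \<le> J v"
      proof (cases "J v")
        case (real b)
        have "(\<lambda>n. a + inner (X n) (v - x) - e) \<longlonglongrightarrow> a + inner y (v - x) - e"
          by (intro tendsto_intros lim)
        moreover have "\<forall>n\<ge>N. a + inner (X n) (v - x) - e \<le> b"
        proof (intro allI impI)
          fix n assume "N \<le> n"
          hence "ereal (a + inner (X n) (v - x) - e) \<le> J v" using ev by (auto simp: K_def)
          thus "a + inner (X n) (v - x) - e \<le> b" using real by simp
        qed
        ultimately have "a + inner y (v - x) - e \<le> b" by (intro LIMSEQ_le_const2) auto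
        thus ?thesis using real by simp
      next
        case PInf thus ?thesis by simp
      next
        case MInf
        have "ereal (a + inner (X N) (v - x) - e) \<le> J v" using ev by (auto simp: K_def)
        thus ?thesis using MInf by simp
      qed }
    thus ?thesis by (simp add: K_def)
  qed
  have bddK: "bdd_below (norm ` K e)" for e by (auto intro: bdd_belowI[of _ 0])
  have rho_le: "\<rho> e \<le> norm \<xi>" if "\<xi> \<in> K e" for e \<xi>
    unfolding \<rho>_def using that bddK by (intro cInf_lower) auto
  have rho_nn: "0 \<le> \<rho> e" if "e \<ge> 0" for e
    unfolding \<rho>_def using z0K[OF that] by (intro cInf_greatest) auto
  have rho_z0: "\<rho> e \<le> norm \<zeta>0" if "e \<ge> 0" for e using rho_le[OF z0K[OF that]] .
  have rho_anti: "\<rho> e' \<le> \<rho> e" if "0 \<le> e" "e \<le> e'" for e e'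
    unfolding \<rho>_def using z0K[OF that(1)] Kmono[OF that(2)] bddK
    by (intro cInf_superset_mono) auto
  have para: "norm (\<xi>1 - \<xi>2)^2 \<le> 2 * norm \<xi>1 ^2 + 2 * norm \<xi>2 ^2 - 4 * \<rho> e ^2"
    if "\<xi>1 \<in> K e" "\<xi>2 \<in> K e" "e \<ge> 0" for \<xi>1 \<xi>2 e
  proof -
    have "\<rho> e \<le> norm ((1/2) *\<^sub>R (\<xi>1 + \<xi>2))" using rho_le[OF Kmid[OF that(1,2)]] .
    hence "\<rho> e ^2 \<le> norm ((1/2) *\<^sub>R (\<xi>1 + \<xi>2)) ^2" using rho_nn[OF that(3)] by (intro power_mono) auto
    thus ?thesis using parallelogram_mid[of \<xi>1 \<xi>2] by linarith
  qed
  define \<epsilon> where "\<epsilon> n = inverse (real (Suc n))" for n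
  have eps_pos: "\<epsilon> n > 0" for n by (simp add: \<epsilon>_def)
  have eps_anti: "\<epsilon> m \<le> \<epsilon> n" if "n \<le> m" for n m
    using that by (simp add: \<epsilon>_def field_simps)
  have eps_lim: "\<epsilon> \<longlonglongrightarrow> 0" unfolding \<epsilon>_def by (rule LIMSEQ_inverse_real_of_nat)
  define \<rho>n where "\<rho>n n = \<rho> (\<epsilon> n)" for n
  have inc: "incseq \<rho>n" unfolding incseq_def \<rho>n_def
    using rho_anti eps_anti eps_pos by (simp add: less_imp_le)
  obtain R where R: "\<rho>n \<longlonglongrightarrow> R" "\<forall>i. \<rho>n i \<le> R"
    using incseq_convergent[OF inc, of "norm \<zeta>0"] rho_z0 eps_pos
    by (metis \<rho>n_def less_imp_le)
  have R_le: "R \<le> norm \<zeta>0"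
    using R(1) rho_z0 eps_pos by (intro LIMSEQ_le_const2[of \<rho>n]) (auto simp: \<rho>n_def less_imp_le)
  have "\<forall>n. \<exists>\<eta>. \<eta> \<in> K (\<epsilon> n) \<and> norm \<eta> < \<rho>n n + \<epsilon> n"
  proof
    fix n
    have lt: "Inf (norm ` K (\<epsilon> n)) < \<rho>n n + \<epsilon> n"
    proof -
      have "\<rho>n n < \<rho>n n + \<epsilon> n" using eps_pos[of n] by (rule less_add_same_cancel1[THEN iffD2])
      moreover have "\<rho>n n = Inf (norm ` K (\<epsilon> n))" by (simp only: \<rho>n_def \<rho>_def)
      ultimately show ?thesis by (simp only:)
    qed
    have z: "\<zeta>0 \<in> K (\<epsilon> n)" by (rule z0K) (rule less_imp_le[OF eps_pos])
    have ne: "norm ` K (\<epsilon> n) \<noteq> {}"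
    proof
      assume "norm ` K (\<epsilon> n) = {}"
      hence "K (\<epsilon> n) = {}" by (simp only: image_is_empty)
      thus False using z by (simp only: empty_iff)
    qed
    obtain y where y: "y \<in> norm ` K (\<epsilon> n)" "y < \<rho>n n + \<epsilon> n"
      using cInf_lessD[OF ne lt] by (elim bexE)
    then obtain \<eta> where "\<eta> \<in> K (\<epsilon> n)" "y = norm \<eta>" by (elim imageE)
    thus "\<exists>\<eta>. \<eta> \<in> K (\<epsilon> n) \<and> norm \<eta> < \<rho>n n + \<epsilon> n" using y(2) by (intro exI[of _ \<eta>]) simp
  qed
  then obtain \<eta> where \<eta>: "\<And>n. \<eta> n \<in> K (\<epsilon> n)" "\<And>n. norm (\<eta> n) < \<rho>n n + \<epsilon> n" by metis
  define \<beta> where "\<beta> n = 4 * (R + \<epsilon> n)^2 - 4 * \<rho>n n ^2" for n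
  have beta_lim: "\<beta> \<longlonglongrightarrow> 0"
  proof -
    have "\<beta> \<longlonglongrightarrow> 4 * (R + 0)^2 - 4 * R^2" unfolding \<beta>_def by (intro tendsto_intros eps_lim R(1))
    thus ?thesis by simp
  qed
  have dist_bound: "norm (\<eta> n - \<eta> m)^2 \<le> \<beta> n" if "n \<le> m" for n m
  proof -
    have m_in: "\<eta> m \<in> K (\<epsilon> n)" using Kmono[OF eps_anti[OF that]] \<eta>(1) by auto
    have p: "norm (\<eta> n - \<eta> m)^2 \<le> 2 * norm (\<eta> n) ^2 + 2 * norm (\<eta> m) ^2 - 4 * \<rho>n n ^2"
      using para[OF \<eta>(1) m_in] eps_pos by (simp add: \<rho>n_def less_imp_le)
    have "norm (\<eta> n) \<le> R + \<epsilon> n" using \<eta>(2)[of n] R(2)[rule_format, of n] by linarith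
    hence a1: "norm (\<eta> n)^2 \<le> (R + \<epsilon> n)^2" by (intro power_mono) auto
    have "norm (\<eta> m) \<le> R + \<epsilon> n" using \<eta>(2)[of m] R(2)[rule_format, of m] eps_anti[OF that] by linarith
    hence a2: "norm (\<eta> m)^2 \<le> (R + \<epsilon> n)^2" by (intro power_mono) auto
    show ?thesis using p a1 a2 by (simp add: \<beta>_def)
  qed
  have "Cauchy \<eta>"
  proof (rule metric_CauchyI)
    fix e :: real assume e: "e > 0"
    have "\<forall>\<^sub>F n in sequentially. \<beta> n < e^2" using beta_lim e by (intro order_tendstoD) auto
    then obtain M where M: "\<And>n. n \<ge> M \<Longrightarrow> \<beta> n < e^2" by (auto simp: eventually_sequentially)
    show "\<exists>M. \<forall>m\<ge>M. \<forall>n\<ge>M. dist (\<eta> m) (\<eta> n) < e"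
    proof (intro exI allI impI)
      fix m n assume mn: "m \<ge> M" "n \<ge> M"
      have "dist (\<eta> m) (\<eta> n)^2 < e^2"
      proof (cases "n \<le> m")
        case True
        have "dist (\<eta> m) (\<eta> n)^2 = norm (\<eta> n - \<eta> m)^2" by (simp add: dist_norm norm_minus_commute)
        thus ?thesis using dist_bound[OF True] M[OF mn(2)] by linarith
      next
        case False
        have "dist (\<eta> m) (\<eta> n)^2 = norm (\<eta> m - \<eta> n)^2" by (simp add: dist_norm)
        thus ?thesis using dist_bound[of m n] False M[OF mn(1)] by linarith
      qed
      thus "dist (\<eta> m) (\<eta> n) < e" using e by (simp add: power_less_imp_less_base)
    qed
  qed
  then obtain \<eta>s where \<eta>s: "\<eta> \<longlonglongrightarrow> \<eta>s" using Cauchy_convergent_iff convergent_def by blast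
  have \<eta>sK: "\<eta>s \<in> K (\<epsilon> n)" for n
    using \<eta>s by (rule Kclosed[where N=n]) (use Kmono[OF eps_anti] \<eta>(1) in blast)
  have "\<eta>s \<in> subdiff J x"
  proof -
    { fix v
      have "J x + ereal (inner \<eta>s (v - x)) \<le> J v"
      proof (cases "J v")
        case (real b)
        have "(\<lambda>n. a + inner \<eta>s (v - x) - \<epsilon> n) \<longlonglongrightarrow> a + inner \<eta>s (v - x) - 0"
          by (intro tendsto_intros eps_lim)
        moreover have "\<forall>n\<ge>0. a + inner \<eta>s (v - x) - \<epsilon> n \<le> b"
        proof (intro allI impI)
          fix n :: nat
          have "ereal (a + inner \<eta>s (v - x) - \<epsilon> n) \<le> J v" using \<eta>sK[of n] by (simp add: K_def)
          thus "a + inner \<eta>s (v - x) - \<epsilon> n \<le> b" using real by simp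
        qed
        ultimately have "a + inner \<eta>s (v - x) - 0 \<le> b" by (intro LIMSEQ_le_const2) auto
        thus ?thesis using real Jx by simp
      next
        case PInf thus ?thesis by simp
      next
        case MInf
        have "ereal (a + inner \<eta>s (v - x) - \<epsilon> 0) \<le> J v" using \<eta>sK[of 0] by (auto simp: K_def)
        thus ?thesis using MInf by simp
      qed }
    thus ?thesis by (simp add: subdiff_def)
  qed
  hence z0_le: "norm \<zeta>0 \<le> norm \<eta>s" using mn by (simp add: min_norm_elem_def)
  have "norm \<eta>s \<le> R + 0"
  proof (rule LIMSEQ_le[of "\<lambda>n. norm (\<eta> n)" _ "\<lambda>n. \<rho>n n + \<epsilon> n"])
    show "(\<lambda>n. norm (\<eta> n)) \<longlonglongrightarrow> norm \<eta>s" by (intro tendsto_intros \<eta>s)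
    show "(\<lambda>n. \<rho>n n + \<epsilon> n) \<longlonglongrightarrow> R + 0" by (intro tendsto_intros R(1) eps_lim)
    show "\<exists>N. \<forall>n\<ge>N. norm (\<eta> n) \<le> \<rho>n n + \<epsilon> n" using \<eta>(2) less_imp_le by blast
  qed
  hence R_eq: "R = norm \<zeta>0" using z0_le R_le by simp
  have "(\<lambda>n. 4 * norm \<zeta>0 ^2 - 4 * \<rho>n n ^2) \<longlonglongrightarrow> 4 * norm \<zeta>0 ^2 - 4 * R^2"
    by (intro tendsto_intros R(1))
  hence "\<forall>\<^sub>F n in sequentially. 4 * norm \<zeta>0 ^2 - 4 * \<rho>n n ^2 < r^2"
    using r R_eq by (intro order_tendstoD) auto
  then obtain n where n: "4 * norm \<zeta>0 ^2 - 4 * \<rho>n n ^2 < r^2" by (auto simp: eventually_sequentially)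
  show ?thesis
  proof (intro exI[of _ "\<epsilon> n"] conjI allI impI)
    show "\<epsilon> n > 0" by (rule eps_pos)
    fix \<xi> e' assume e': "e' < \<epsilon> n" and nx: "norm \<xi> \<le> norm \<zeta>0"
      and xK: "\<forall>v. ereal (a + inner \<xi> (v - x) - e') \<le> J v"
    have "\<xi> \<in> K e'" using xK by (simp add: K_def)
    hence xK': "\<xi> \<in> K (\<epsilon> n)" using Kmono[of e' "\<epsilon> n"] e' by auto
    have "norm (\<xi> - \<zeta>0)^2 \<le> 2 * norm \<xi> ^2 + 2 * norm \<zeta>0 ^2 - 4 * \<rho>n n ^2"
      using para[OF xK' z0K] eps_pos by (simp add: \<rho>n_def less_imp_le)
    also have "\<dots> \<le> 4 * norm \<zeta>0 ^2 - 4 * \<rho>n n ^2"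
      using power_mono[OF nx, of 2] by simp
    also have "\<dots> < r^2" by (rule n)
    finally show "norm (\<xi> - \<zeta>0) < r" using r by (simp add: power_less_imp_less_base)
  qed
qed


lemma vd_quot:
  fixes f :: "real \<Rightarrow> 'b::real_normed_vector"
  assumes "(f has_vector_derivative f') (at t within {t..})"
  shows "((\<lambda>s. (1 / (s - t)) *\<^sub>R (f s - f t)) \<longlongrightarrow> f') (at_right t)"
proof -
  have "((\<lambda>y. (1 / \<bar>y - t\<bar>) *\<^sub>R (f y - (f t + (y - t) *\<^sub>R f'))) \<longlongrightarrow> 0) (at t within {t..})"
    using assms unfolding has_vector_derivative_def has_derivative_within by simp
  hence "((\<lambda>y. (1 / \<bar>y - t\<bar>) *\<^sub>R (f y - (f t + (y - t) *\<^sub>R f'))) \<longlongrightarrow> 0) (at_right t)"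
    by (simp add: at_within_Ici_at_right)
  hence "((\<lambda>y. (1 / \<bar>y - t\<bar>) *\<^sub>R (f y - (f t + (y - t) *\<^sub>R f')) + f') \<longlongrightarrow> 0 + f') (at_right t)"
    by (intro tendsto_intros)
  moreover have "\<forall>\<^sub>F y in at_right t. (1 / \<bar>y - t\<bar>) *\<^sub>R (f y - (f t + (y - t) *\<^sub>R f')) + f'
      = (1 / (y - t)) *\<^sub>R (f y - f t)"
    using eventually_at_right_less[of t]
  proof eventually_elim
    case (elim y)
    have ab: "\<bar>y - t\<bar> = y - t" using elim by simp
    have "y/(y-t) = 1 + t/(y-t)" using elim by (simp add: field_simps)
    hence e: "(y / (y - t)) *\<^sub>R f' = f' + (t / (y - t)) *\<^sub>R f'" by (simp add: scaleR_add_left)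
    show ?case using elim ab e by (simp add: scaleR_diff_right divide_simps algebra_simps)
  qed
  ultimately show ?thesis by (simp add: tendsto_cong)
qed

lemma inner_self_vd:
  fixes w :: "real \<Rightarrow> 'b::real_inner"
  assumes "(w has_vector_derivative w') (at x within S)"
  shows "((\<lambda>r. w r \<bullet> w r) has_real_derivative 2 * (w x \<bullet> w')) (at x within S)"
proof -
  have d: "(w has_derivative (\<lambda>h. h *\<^sub>R w')) (at x within S)"
    using assms by (simp add: has_vector_derivative_def)
  have "((\<lambda>r. w r \<bullet> w r) has_derivative (\<lambda>h. w x \<bullet> (h *\<^sub>R w') + (h *\<^sub>R w') \<bullet> w x)) (at x within S)"
    by (rule has_derivative_inner[OF d d])
  moreover have "(\<lambda>h. w x \<bullet> (h *\<^sub>R w') + (h *\<^sub>R w') \<bullet> w x) = (*) (2 * (w x \<bullet> w'))"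
    by (auto simp: inner_commute algebra_simps)
  ultimately show ?thesis by (simp add: has_field_derivative_def)
qed

lemma norm_powr_inner:
  fixes x :: "'b::real_inner"
  shows "norm x powr q = (x \<bullet> x) powr (q / 2)"
proof -
  have "norm x = (x \<bullet> x) powr (1/2)" by (simp add: norm_eq_sqrt_inner powr_half_sqrt)
  hence "norm x powr q = ((x \<bullet> x) powr (1/2)) powr q" by simp
  also have "\<dots> = (x \<bullet> x) powr (q / 2)" by (simp add: powr_powr)
  finally show ?thesis .
qed

lemma lsc_comp:
  assumes lsc: "lsc_functional J" and lim: "(u \<longlongrightarrow> u0) F" and y: "y < J u0"
  shows "\<forall>\<^sub>F s in F. y < J (u s)"
proof -
  have "J u0 \<le> Liminf (at u0) J" using lsc unfolding lsc_functional_def by (rule spec)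
  with y have "y < Liminf (at u0) J" by (rule less_le_trans)
  hence "\<forall>\<^sub>F x in at u0. y < J x" by (rule less_LiminfD)
  then obtain S where S: "open S" "u0 \<in> S" "\<And>x. x \<in> S \<Longrightarrow> x \<noteq> u0 \<Longrightarrow> y < J x"
    unfolding eventually_at_topological by blast
  have "\<forall>\<^sub>F s in F. u s \<in> S" using lim S(1,2) by (rule topological_tendstoD)
  thus ?thesis
  proof eventually_elim
    case (elim s)
    show ?case
    proof (cases "u s = u0")
      case True thus ?thesis using y by simp
    next
      case False thus ?thesis using S(3)[OF elim] by simp
    qed
  qed
qed

locale flowctx =
  fixes J :: "'a::{real_inner,complete_space} \<Rightarrow> ereal" and p :: real and u :: "real \<Rightarrow> 'a"
  assumes conv: "convex_functional J" and lsc: "lsc_functional J" and proper: "proper_functional J"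
    and hom: "abs_homogeneous p J" and p2: "p \<ge> 2"
    and cont: "continuous_on {0..} u"
    and lip: "\<forall>\<delta>>0. \<exists>C. C-lipschitz_on {\<delta>..} u"
    and der: "\<forall>t>0. \<exists>\<zeta>. min_norm_elem (subdiff J (u t)) \<zeta> \<and> (u has_vector_derivative (- \<zeta>)) (at t within {t..})"
begin

definition z where "z t = (SOME \<zeta>. min_norm_elem (subdiff J (u t)) \<zeta> \<and> (u has_vector_derivative (- \<zeta>)) (at t within {t..}))"
definition g where "g t = real_of_ereal (J (u t))"
definition lam where "lam t = p * g t / norm (u t) powr p"
definition N where "N t = u t \<bullet> u t"

lemma z_prop: "t > 0 \<Longrightarrow> min_norm_elem (subdiff J (u t)) (z t) \<and> (u has_vector_derivative (- z t)) (at t within {t..})"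
proof -
  assume t: "t > 0"
  have "\<exists>\<zeta>. min_norm_elem (subdiff J (u t)) \<zeta> \<and> (u has_vector_derivative (- \<zeta>)) (at t within {t..})"
    using der t by simp
  thus ?thesis unfolding z_def by (rule someI_ex)
qed

lemma z_sub: "t > 0 \<Longrightarrow> z t \<in> subdiff J (u t)"
  using z_prop by (simp add: min_norm_elem_def)

lemma z_min: "t > 0 \<Longrightarrow> \<xi> \<in> subdiff J (u t) \<Longrightarrow> norm (z t) \<le> norm \<xi>"
  using z_prop by (simp add: min_norm_elem_def)

lemma u_der: "t > 0 \<Longrightarrow> (u has_vector_derivative (- z t)) (at t within {t..})"
  using z_prop by simp

lemma Jg: "t > 0 \<Longrightarrow> J (u t) = ereal (g t)"
proof -
  assume t: "t > 0"
  obtain a where "J (u t) = ereal a" using subdiff_fin[OF proper z_sub[OF t]] by blast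
  thus ?thesis by (simp add: g_def)
qed

lemma J_nn: "0 \<le> J x" by (rule J_nonneg[OF conv hom])

lemma g_nn: "0 \<le> g t" unfolding g_def using J_nn by (simp add: real_of_ereal_pos)

lemma p_pos: "p > 0" using p2 by simp

lemma euler_t: "t > 0 \<Longrightarrow> inner (z t) (u t) = p * g t"
  using euler[OF hom z_sub Jg] .

lemma sub_t: "t > 0 \<Longrightarrow> ereal (g t + inner (z t) (v - u t)) \<le> J v"
  using subgrad_ereal[OF z_sub Jg] .

lemma sub_tt: "s > 0 \<Longrightarrow> t > 0 \<Longrightarrow> g s + inner (z s) (u t - u s) \<le> g t"
  using subgrad_real[OF z_sub Jg Jg] .

lemma mono_tt: "s > 0 \<Longrightarrow> t > 0 \<Longrightarrow> 0 \<le> inner (z s - z t) (u s - u t)"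
  using subgrad_mono[OF z_sub Jg z_sub Jg] .

lemma u_isCont: "t > 0 \<Longrightarrow> isCont u t"
proof -
  assume t: "t > 0"
  have "continuous_on {0<..} u" by (rule continuous_on_subset[OF cont]) auto
  thus ?thesis using t by (simp add: continuous_on_eq_continuous_at)
qed

lemma u_lim: "t > 0 \<Longrightarrow> (u \<longlongrightarrow> u t) (at t within S)"
proof -
  assume "t > 0"
  hence "(u \<longlongrightarrow> u t) (at t)" using u_isCont by (simp add: isCont_def)
  thus ?thesis by (rule tendsto_within_subset) simp
qed

lemma u_cont_on: "0 \<le> a \<Longrightarrow> continuous_on {a..b} u"
  by (rule continuous_on_subset[OF cont]) auto

lemma zbound: "\<eta> > 0 \<Longrightarrow> \<exists>C. \<forall>t\<ge>\<eta>. norm (z t) \<le> C"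
proof -
  assume eta: "\<eta> > 0"
  have "\<exists>C. C-lipschitz_on {\<eta>..} u" using lip eta by simp
  then obtain C where C: "C-lipschitz_on {\<eta>..} u" by (elim exE)
  have "norm (z t) \<le> C" if t: "t \<ge> \<eta>" for t
  proof -
    have "((\<lambda>s. (1 / (s - t)) *\<^sub>R (u s - u t)) \<longlongrightarrow> - z t) (at_right t)"
      using vd_quot[OF u_der] t eta by simp
    hence "((\<lambda>s. norm ((1 / (s - t)) *\<^sub>R (u s - u t))) \<longlongrightarrow> norm (- z t)) (at_right t)"
      by (rule tendsto_norm)
    moreover have "\<forall>\<^sub>F s in at_right t. norm ((1 / (s - t)) *\<^sub>R (u s - u t)) \<le> C"
      using eventually_at_right_less[of t]
    proof eventually_elim
      case (elim s)
      have "dist (u s) (u t) \<le> C * dist s t" using C t elim by (auto simp: lipschitz_on_def)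
      hence "norm (u s - u t) \<le> C * (s - t)" using elim by (simp add: dist_norm)
      thus ?case using elim by (simp add: divide_simps mult.commute)
    qed
    ultimately have "norm (- z t) \<le> C" by (intro tendsto_upperbound) auto
    thus ?thesis by simp
  qed
  thus ?thesis by blast
qed


lemma u_shift_der:
  assumes r: "r > 0" and h: "h \<ge> 0"
  shows "((\<lambda>s. u (s + h)) has_vector_derivative (- z (r + h))) (at r within {r..})"
proof -
  have d1: "((\<lambda>s. s + h) has_vector_derivative 1) (at r within {r..})"
    by (auto intro!: derivative_eq_intros)
  have img: "(\<lambda>s. s + h) ` {r..} = {r + h..}"
  proof
    show "(\<lambda>s. s + h) ` {r..} \<subseteq> {r + h..}" by auto
    show "{r + h..} \<subseteq> (\<lambda>s. s + h) ` {r..}"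
    proof
      fix y assume "y \<in> {r + h..}"
      hence "y - h \<in> {r..}" "y = (y - h) + h" by auto
      thus "y \<in> (\<lambda>s. s + h) ` {r..}" by (rule rev_image_eqI)
    qed
  qed
  have d2: "(u has_vector_derivative (- z (r + h))) (at ((\<lambda>s. s + h) r) within (\<lambda>s. s + h) ` {r..})"
    unfolding img using u_der[of "r + h"] r h by simp
  from vector_diff_chain_within[OF d1 d2] show ?thesis by (simp add: o_def)
qed

lemma contraction:
  assumes t: "0 < t" "t \<le> s" and h: "h > 0"
  shows "norm (u (s + h) - u s) \<le> norm (u (t + h) - u t)"
proof -
  define D where "D r = (u (r + h) - u r) \<bullet> (u (r + h) - u r)" for r
  define D' where "D' r = 2 * ((u (r + h) - u r) \<bullet> (- z (r + h) - - z r))" for r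
  have "D s \<le> D t"
  proof (rule dini_deriv[where G'=D' and G=D and a=t and b=s])
    show "t \<le> s" by (rule t(2))
    have c1: "continuous_on {t..s} (\<lambda>r. u (r + h))"
    proof -
      have "continuous_on {t..s} (\<lambda>r. r + h)" by (intro continuous_intros)
      moreover have "continuous_on ((\<lambda>r. r + h) ` {t..s}) u"
        by (rule continuous_on_subset[OF cont]) (use t h in auto)
      ultimately show ?thesis using continuous_on_compose[of "{t..s}" "\<lambda>r. r + h" u] by (simp add: o_def)
    qed
    have c2: "continuous_on {t..s} u" using t by (intro u_cont_on) simp
    show "continuous_on {t..s} D" unfolding D_def by (intro continuous_intros c1 c2)
    fix x assume x: "x \<in> {t..<s}"
    hence x0: "x > 0" using t by simp
    have "((\<lambda>r. u (r + h) - u r) has_vector_derivative (- z (x + h) - - z x)) (at x within {x..})"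
      by (intro has_vector_derivative_diff u_shift_der u_der x0) (use h in simp)
    from inner_self_vd[OF this] show "(D has_real_derivative D' x) (at x within {x..})"
      by (simp add: D_def[abs_def] D'_def)
    have "0 \<le> (z (x + h) - z x) \<bullet> (u (x + h) - u x)" using mono_tt x0 h by simp
    moreover have e: "- z (x + h) - - z x = - (z (x + h) - z x)" by simp
    have "(u (x + h) - u x) \<bullet> (- z (x + h) - - z x) = - ((u (x + h) - u x) \<bullet> (z (x + h) - z x))"
      unfolding e by (rule inner_minus_right)
    moreover have "(u (x + h) - u x) \<bullet> (z (x + h) - z x) = (z (x + h) - z x) \<bullet> (u (x + h) - u x)"
      by (rule inner_commute)
    ultimately show "D' x \<le> 0" unfolding D'_def by linarith
  qed
  hence "norm (u (s + h) - u s) ^ 2 \<le> norm (u (t + h) - u t) ^ 2"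
    unfolding D_def by (simp only: power2_norm_eq_inner)
  thus ?thesis by (rule power2_le_imp_le) simp
qed

lemma znorm_mono:
  assumes t: "0 < t" "t \<le> s"
  shows "norm (z s) \<le> norm (z t)"
proof -
  have q: "((\<lambda>h. norm ((1 / h) *\<^sub>R (u (h + r) - u r))) \<longlongrightarrow> norm (z r)) (at_right 0)" if r: "r > 0" for r
  proof -
    have "((\<lambda>s. (1 / (s - r)) *\<^sub>R (u s - u r)) \<longlongrightarrow> - z r) (at_right r)" using vd_quot[OF u_der[OF r]] .
    hence "((\<lambda>s. norm ((1 / (s - r)) *\<^sub>R (u s - u r))) \<longlongrightarrow> norm (- z r)) (at_right r)"
      by (rule tendsto_norm)
    hence "((\<lambda>h. norm ((1 / ((h + r) - r)) *\<^sub>R (u (h + r) - u r))) \<longlongrightarrow> norm (- z r)) (at_right 0)"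
      by (subst (asm) filterlim_at_right_to_0) simp
    thus ?thesis by simp
  qed
  have "norm (z s) \<le> norm (z t)"
  proof (rule tendsto_le[OF _ q q])
    show "at_right (0::real) \<noteq> bot" by simp
    show "\<forall>\<^sub>F h in at_right 0. norm ((1 / h) *\<^sub>R (u (h + s) - u s)) \<le> norm ((1 / h) *\<^sub>R (u (h + t) - u t))"
      using eventually_at_right_less[of 0]
    proof eventually_elim
      case (elim h)
      have "norm (u (s + h) - u s) \<le> norm (u (t + h) - u t)" by (rule contraction[OF t elim])
      thus ?case using elim by (simp add: add.commute divide_right_mono)
    qed
  qed (use t in auto)
  thus ?thesis .
qed


lemma ev_pos: "x > 0 \<Longrightarrow> \<forall>\<^sub>F s in at x within S. (0::real) < s"
proof -
  assume "x > 0"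
  thus ?thesis using order_tendstoD(1)[OF tendsto_ident_at, of 0 x S] by simp
qed

lemma g_lsc:
  assumes x: "x > 0" and y: "y < g x"
  shows "\<forall>\<^sub>F s in at x within S. y < g s"
proof -
  have "ereal y < J (u x)" using Jg[OF x] y by simp
  hence "\<forall>\<^sub>F s in at x within S. ereal y < J (u s)" by (rule lsc_comp[OF lsc u_lim[OF x]])
  with ev_pos[OF x] show ?thesis
  proof eventually_elim
    case (elim s) thus ?case using Jg[of s] by simp
  qed
qed

lemma inner_z_bound:
  assumes "0 < t" "t \<le> s"
  shows "inner (z s) w \<le> norm (z t) * norm w"
proof -
  have "inner (z s) w \<le> norm (z s) * norm w" by (rule norm_cauchy_schwarz)
  also have "\<dots> \<le> norm (z t) * norm w" using znorm_mono[OF assms] by (intro mult_right_mono) auto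
  finally show ?thesis .
qed

lemma g_upper:
  assumes "0 < t" "t \<le> s"
  shows "g s \<le> g t + norm (z t) * norm (u s - u t)"
proof -
  have "g s + inner (z s) (u t - u s) \<le> g t" using sub_tt assms by simp
  moreover have "inner (z s) (u t - u s) = - inner (z s) (u s - u t)"
    by (simp add: inner_diff_right)
  moreover have "inner (z s) (u s - u t) \<le> norm (z t) * norm (u s - u t)" by (rule inner_z_bound[OF assms])
  ultimately show ?thesis by linarith
qed

lemma g_rc:
  assumes t: "t > 0"
  shows "(g \<longlongrightarrow> g t) (at_right t)"
proof (rule order_tendstoI)
  fix y assume "y < g t"
  thus "\<forall>\<^sub>F s in at_right t. y < g s" by (rule g_lsc[OF t])
next
  fix y assume y: "y > g t"
  have "((\<lambda>s. g t + norm (z t) * norm (u s - u t)) \<longlongrightarrow> g t + norm (z t) * norm (u t - u t)) (at_right t)"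
    by (intro tendsto_intros u_lim[OF t])
  hence "\<forall>\<^sub>F s in at_right t. g t + norm (z t) * norm (u s - u t) < y"
    using y by (intro order_tendstoD(2)) auto
  with eventually_at_right_less[of t] show "\<forall>\<^sub>F s in at_right t. g s < y"
  proof eventually_elim
    case (elim s) thus ?case using g_upper[OF t, of s] by simp
  qed
qed

lemma z_rc:
  assumes t: "t > 0"
  shows "(z \<longlongrightarrow> z t) (at_right t)"
proof (rule tendstoI)
  fix r :: real assume r: "r > 0"
  have mn: "min_norm_elem (subdiff J (u t)) (z t)" using z_prop[OF t] by simp
  obtain e where e: "e > 0" and K: "\<And>\<xi> e'. e' < e \<Longrightarrow> norm \<xi> \<le> norm (z t) \<Longrightarrow>
      (\<forall>v. ereal (g t + inner \<xi> (v - u t) - e') \<le> J v) \<Longrightarrow> norm (\<xi> - z t) < r"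
    using K_lemma[OF Jg[OF t] mn r] by metis
  define E where "E s = g t - g s + inner (z s) (u s - u t)" for s
  have lim: "((\<lambda>s. (g t - g s) + norm (z t) * norm (u s - u t)) \<longlongrightarrow> (g t - g t) + norm (z t) * norm (u t - u t)) (at_right t)"
    by (intro tendsto_intros g_rc[OF t] u_lim[OF t])
  have ev1: "\<forall>\<^sub>F s in at_right t. (g t - g s) + norm (z t) * norm (u s - u t) < e"
    using order_tendstoD(2)[OF lim] e by simp
  with eventually_at_right_less[of t] show "\<forall>\<^sub>F s in at_right t. dist (z s) (z t) < r"
  proof eventually_elim
    case (elim s)
    have s0: "s > 0" using elim t by simp
    have "E s \<le> (g t - g s) + norm (z t) * norm (u s - u t)"
      unfolding E_def using inner_z_bound[OF t, of s] elim by simp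
    hence Ee: "E s < e" using elim by simp
    have nz: "norm (z s) \<le> norm (z t)" using znorm_mono[OF t] elim by simp
    have "\<forall>v. ereal (g t + inner (z s) (v - u t) - E s) \<le> J v"
    proof
      fix v
      have "g t + inner (z s) (v - u t) - E s = g s + inner (z s) (v - u s)"
        unfolding E_def by (simp add: inner_diff_right)
      thus "ereal (g t + inner (z s) (v - u t) - E s) \<le> J v" using sub_t[OF s0, of v] by simp
    qed
    from K[OF Ee nz this] show ?case by (simp add: dist_norm)
  qed
qed


lemma quot_inner:
  assumes "t < s"
  shows "inner (z s) (u s - u t) = (s - t) * inner (z s) ((1 / (s - t)) *\<^sub>R (u s - u t))"
  using assms by (simp add: inner_scaleR_right)

lemma zq_lim:
  assumes t: "t > 0"
  shows "((\<lambda>s. inner (z s) ((1 / (s - t)) *\<^sub>R (u s - u t))) \<longlongrightarrow> inner (z t) (- z t)) (at_right t)"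
  by (intro tendsto_inner z_rc[OF t] vd_quot[OF u_der[OF t]])

lemma g_rd:
  assumes t: "t > 0" and e: "e > 0"
  shows "\<forall>\<^sub>F s in at_right t. g s \<le> g t + e * (s - t)"
proof (rule rd_helper[OF zq_lim[OF t]])
  have "0 \<le> inner (z t) (z t)" by simp
  moreover have "inner (z t) (- z t) = - inner (z t) (z t)" by (rule inner_minus_right)
  ultimately show "inner (z t) (- z t) < e" using e by linarith
  show "\<forall>\<^sub>F s in at_right t. g s - g t \<le> (s - t) * inner (z s) ((1 / (s - t)) *\<^sub>R (u s - u t))"
    using eventually_at_right_less[of t]
  proof eventually_elim
    case (elim s)
    have "g s + inner (z s) (u t - u s) \<le> g t" using sub_tt t elim by simp
    moreover have "inner (z s) (u t - u s) = - inner (z s) (u s - u t)" by (simp add: inner_diff_right)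
    ultimately show ?case using quot_inner[OF elim] by linarith
  qed
qed

lemma g_anti:
  assumes a: "0 < a" "a \<le> b"
  shows "g b \<le> g a"
proof (rule dini_mono[OF a(2)])
  fix x y assume "x \<in> {a..b}" "y < g x"
  thus "\<forall>\<^sub>F s in at x within {a..b}. y < g s" using a by (intro g_lsc) auto
next
  fix x e :: real assume "x \<in> {a..<b}" "e > 0"
  thus "\<forall>\<^sub>F s in at_right x. g s \<le> g x + e * (s - x)" using a by (intro g_rd) auto
qed

lemma N_der:
  assumes t: "t > 0"
  shows "(N has_real_derivative (- 2 * p * g t)) (at t within {t..})"
proof -
  have "((\<lambda>r. u r \<bullet> u r) has_real_derivative 2 * (u t \<bullet> - z t)) (at t within {t..})"
    by (rule inner_self_vd[OF u_der[OF t]])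
  moreover have "u t \<bullet> - z t = - (p * g t)" using euler_t[OF t] by (simp add: inner_commute)
  ultimately have "((\<lambda>r. u r \<bullet> u r) has_real_derivative - (2 * (p * g t))) (at t within {t..})" by simp
  moreover have "- (2 * (p * g t)) = - 2 * p * g t" by simp
  ultimately show ?thesis unfolding N_def[abs_def] by simp
qed

lemma N_cont: "0 \<le> a \<Longrightarrow> continuous_on {a..b} N"
  unfolding N_def[abs_def] by (intro continuous_intros u_cont_on)

lemma N_pos: "u t \<noteq> 0 \<Longrightarrow> N t > 0"
  by (simp add: N_def)

lemma N_nn: "N t \<ge> 0"
  by (simp add: N_def)

lemma lam_eq: "lam s = p * g s * N s powr (- p / 2)"
proof -
  have e1: "norm (u s) powr p = N s powr (p / 2)" unfolding N_def by (rule norm_powr_inner)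
  have e2: "N s powr (- p / 2) = inverse (N s powr (p / 2))"
  proof -
    have "- p / 2 = - (p / 2)" by simp
    hence "N s powr (- p / 2) = N s powr (- (p / 2))" by (rule arg_cong)
    thus ?thesis using powr_minus[of "N s" "p / 2"] by (rule trans)
  qed
  show ?thesis unfolding lam_def e1 divide_inverse[of "p * g s"] e2[symmetric] by (rule refl)
qed

lemma IP_der:
  assumes t: "t > 0" and ut: "u t \<noteq> 0"
  shows "((\<lambda>s. N s powr (- p / 2)) has_real_derivative
           ((- p / 2) * N t powr (- p / 2 - 1)) * (- 2 * p * g t)) (at t within {t..})"
proof -
  have "((\<lambda>x. x powr (- p / 2)) has_real_derivative (- p / 2) * N t powr (- p / 2 - 1)) (at (N t))"
    by (rule has_real_derivative_powr[OF N_pos[OF ut]])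
  from DERIV_chain'[OF N_der[OF t] this] show ?thesis .
qed

lemma lsc_mult:
  fixes f h :: "real \<Rightarrow> real"
  assumes flsc: "\<And>y. y < f0 \<Longrightarrow> \<forall>\<^sub>F s in F. y < f s" and hlim: "(h \<longlongrightarrow> h0) F"
    and h0: "h0 > 0" and fnn: "\<forall>\<^sub>F s in F. f s \<ge> 0" and y: "y < f0 * h0"
  shows "\<forall>\<^sub>F s in F. y < f s * h s"
proof -
  have hpos: "\<forall>\<^sub>F s in F. h s > 0" using order_tendstoD(1)[OF hlim h0] .
  show ?thesis
  proof (cases "y < 0")
    case True
    from hpos fnn show ?thesis
    proof eventually_elim
      case (elim s) thus ?case using True by (simp add: zero_le_mult_iff less_le_trans[OF True])
    qed
  next
    case False
    hence y0: "y \<ge> 0" by simp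
    have f0: "f0 > 0" using y y0 h0 by (metis mult_nonpos_nonneg leD less_imp_le not_le order.strict_trans1)
    define y1 where "y1 = (y / h0 + f0) / 2"
    have yh: "y / h0 < f0" using y h0 by (simp add: divide_less_eq mult.commute)
    have y1a1: "y / h0 < y1" using yh unfolding y1_def by (rule field_less_half_sum)
    have y1a2: "y1 < f0" using yh unfolding y1_def by (simp add: field_sum_of_halves)
    note y1a = y1a1 y1a2
    have y1p: "y1 > 0" using y1a y0 h0 by (smt (verit) divide_nonneg_pos)
    have "y / y1 < h0" using y1a(1) y1p h0 by (simp add: divide_less_eq mult.commute)
    hence ev2: "\<forall>\<^sub>F s in F. y / y1 < h s" by (rule order_tendstoD(1)[OF hlim])
    from flsc[OF y1a(2)] ev2 show ?thesis
    proof eventually_elim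
      case (elim s)
      have hs: "h s > 0" using elim y0 y1p by (smt (verit) divide_nonneg_pos)
      have "y = y1 * (y / y1)" using y1p by simp
      also have "\<dots> < y1 * h s" using elim y1p by (intro mult_strict_left_mono) auto
      also have "\<dots> < f s * h s" using elim hs by (intro mult_strict_right_mono) auto
      finally show ?case .
    qed
  qed
qed

lemma lam_lsc:
  assumes x: "x > 0" and ux: "u x \<noteq> 0" and y: "y < lam x"
  shows "\<forall>\<^sub>F s in at x within S. y < lam s"
proof -
  have IPc: "((\<lambda>s. N s powr (- p / 2)) \<longlongrightarrow> N x powr (- p / 2)) (at x within S)"
  proof -
    have "(N \<longlongrightarrow> N x) (at x within S)" unfolding N_def[abs_def] by (intro tendsto_intros u_lim[OF x])
    thus ?thesis using N_pos[OF ux] by (intro tendsto_intros) auto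
  qed
  have flsc: "\<forall>\<^sub>F s in at x within S. y' < p * g s" if "y' < p * g x" for y'
  proof -
    have "y' / p < g x" using that p_pos by (simp add: divide_less_eq mult.commute)
    from g_lsc[OF x this] show ?thesis
      by eventually_elim (use p_pos in \<open>simp add: divide_less_eq mult.commute\<close>)
  qed
  have "\<forall>\<^sub>F s in at x within S. y < p * g s * N s powr (- p / 2)"
  proof (rule lsc_mult[OF flsc IPc])
    show "N x powr (- p / 2) > 0" using N_pos[OF ux] by simp
    show "\<forall>\<^sub>F s in at x within S. 0 \<le> p * g s" using p_pos g_nn by simp
    show "y < p * g x * N x powr (- p / 2)" using y by (simp add: lam_eq)
  qed
  thus ?thesis by (simp add: lam_eq)
qed


lemma L_nonpos:
  assumes t: "t > 0" and ut: "u t \<noteq> 0"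
  shows "p * inner (z t) (- z t) * N t powr (- p / 2)
     + p * g t * (((- p / 2) * N t powr (- p / 2 - 1)) * (- 2 * p * g t)) \<le> 0"
proof -
  define n where "n = N t"
  define A where "A = N t powr (- p / 2)"
  define zz where "zz = inner (z t) (z t)"
  define G where "G = g t"
  have n: "n > 0" using N_pos[OF ut] by (simp add: n_def)
  have A0: "A > 0" using n by (simp add: A_def n_def)
  have pA: "N t powr (- p / 2 - 1) = A / n"
    unfolding A_def n_def using powr_diff[of "N t" "- p / 2" 1] n by (simp add: n_def)
  have cs: "(p * G)^2 \<le> zz * n"
    using Cauchy_Schwarz_ineq[of "z t" "u t"] euler_t[OF t] by (simp add: N_def n_def zz_def G_def)
  have "p * inner (z t) (- z t) * N t powr (- p / 2)
     + p * g t * (((- p / 2) * N t powr (- p / 2 - 1)) * (- 2 * p * g t))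
     = p * A * ((p * G)^2 / n - zz)"
  proof -
    have eA: "N t powr (- p / 2) = A" by (simp only: A_def)
    have ez: "inner (z t) (- z t) = - zz" by (simp add: zz_def)
    have eG: "g t = G" by (simp only: G_def)
    show ?thesis unfolding pA eA ez eG using n by (simp add: field_simps power2_eq_square)
  qed
  also have "\<dots> \<le> 0"
  proof (rule mult_nonneg_nonpos)
    show "0 \<le> p * A" using p_pos A0 by simp
    have "(p * G)^2 / n \<le> zz" using cs n by (simp add: divide_le_eq)
    thus "(p * G)^2 / n - zz \<le> 0" by simp
  qed
  finally show ?thesis .
qed

lemma lam_rd:
  assumes t: "t > 0" and ut: "u t \<noteq> 0" and e: "e > 0"
  shows "\<forall>\<^sub>F s in at_right t. lam s \<le> lam t + e * (s - t)"
proof -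
  define IP where "IP s = N s powr (- p / 2)" for s
  define IP' where "IP' = ((- p / 2) * N t powr (- p / 2 - 1)) * (- 2 * p * g t)"
  have IPd: "(IP has_real_derivative IP') (at t within {t..})"
    using IP_der[OF t ut] by (simp add: IP_def[abs_def] IP'_def)
  have IPq: "((\<lambda>s. (IP s - IP t) / (s - t)) \<longlongrightarrow> IP') (at_right t)"
    using IPd by (simp add: has_field_derivative_iff at_within_Ici_at_right)
  have IPc: "(IP \<longlongrightarrow> IP t) (at_right t)"
    using DERIV_continuous[OF IPd] by (simp add: continuous_within at_within_Ici_at_right)
  define B where "B s = p * inner (z s) ((1 / (s - t)) *\<^sub>R (u s - u t)) * IP s + p * g t * ((IP s - IP t) / (s - t))" for s
  define L where "L = p * inner (z t) (- z t) * IP t + p * g t * IP'"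
  have BL: "(B \<longlongrightarrow> L) (at_right t)" unfolding B_def[abs_def] L_def
    by (intro tendsto_intros zq_lim[OF t] IPc IPq)
  have L0: "L \<le> 0" unfolding L_def IP_def IP'_def by (rule L_nonpos[OF t ut])
  show ?thesis
  proof (rule rd_helper[OF BL])
    show "L < e" using L0 e by simp
    show "\<forall>\<^sub>F s in at_right t. lam s - lam t \<le> (s - t) * B s"
      using eventually_at_right_less[of t]
    proof eventually_elim
      case (elim s)
      have s0: "s > 0" using elim t by simp
      have ls: "lam s = p * g s * IP s" and lt: "lam t = p * g t * IP t" by (simp_all add: lam_eq IP_def)
      have IPs: "IP s \<ge> 0" by (simp add: IP_def)
      have "g s + inner (z s) (u t - u s) \<le> g t" using sub_tt s0 t by simp
      moreover have "inner (z s) (u t - u s) = - inner (z s) (u s - u t)" by (simp add: inner_diff_right)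
      ultimately have gd: "g s - g t \<le> inner (z s) (u s - u t)" by linarith
      have "p * (g s - g t) * IP s \<le> p * inner (z s) (u s - u t) * IP s"
        using gd p_pos IPs by (intro mult_right_mono mult_left_mono) auto
      also have "\<dots> = (s - t) * (p * inner (z s) ((1 / (s - t)) *\<^sub>R (u s - u t)) * IP s)"
        using quot_inner[OF elim] by simp
      finally have i1: "p * (g s - g t) * IP s \<le> (s - t) * (p * inner (z s) ((1 / (s - t)) *\<^sub>R (u s - u t)) * IP s)" .
      have i2: "p * g t * (IP s - IP t) = (s - t) * (p * g t * ((IP s - IP t) / (s - t)))"
        using elim by simp
      have "lam s - lam t = p * (g s - g t) * IP s + p * g t * (IP s - IP t)"
        unfolding ls lt by (simp add: algebra_simps)
      also have "\<dots> \<le> (s - t) * B s"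
      proof -
        have "(s - t) * B s = (s - t) * (p * inner (z s) ((1 / (s - t)) *\<^sub>R (u s - u t)) * IP s)
            + (s - t) * (p * g t * ((IP s - IP t) / (s - t)))" unfolding B_def by (rule distrib_left)
        thus ?thesis using i1 i2 by linarith
      qed
      finally show ?case .
    qed
  qed
qed

lemma lam_anti:
  assumes a: "0 < a" "a \<le> b" and nz: "\<And>s. s \<in> {a..b} \<Longrightarrow> u s \<noteq> 0"
  shows "lam b \<le> lam a"
proof (rule dini_mono[OF a(2)])
  fix x y assume "x \<in> {a..b}" "y < lam x"
  thus "\<forall>\<^sub>F s in at x within {a..b}. y < lam s" using a nz by (intro lam_lsc) auto
next
  fix x e :: real assume "x \<in> {a..<b}" "e > 0"
  thus "\<forall>\<^sub>F s in at_right x. lam s \<le> lam x + e * (s - x)" using a nz by (intro lam_rd) auto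
qed


lemma powr_N_der:
  assumes r: "r > 0" and ur: "u r \<noteq> 0"
  shows "((\<lambda>s. N s powr q) has_real_derivative (q * N r powr (q - 1)) * (- 2 * p * g r)) (at r within {r..})"
proof -
  have "((\<lambda>x. x powr q) has_real_derivative q * N r powr (q - 1)) (at (N r))"
    by (rule has_real_derivative_powr[OF N_pos[OF ur]])
  from DERIV_chain'[OF N_der[OF r] this] show ?thesis .
qed

lemma phi_gt2:
  assumes p: "p > 2" and a: "0 \<le> a" "a \<le> t" and nz: "\<And>s. s \<in> {a..t} \<Longrightarrow> u s \<noteq> 0"
    and lb: "\<And>s. s \<in> {a<..t} \<Longrightarrow> lam s \<le> La"
  shows "norm (u t) powr (2 - p) \<le> norm (u a) powr (2 - p) + (p - 2) * La * (t - a)"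
proof -
  define \<Phi> where "\<Phi> r = N r powr ((2 - p) / 2) - (p - 2) * La * (r - a)" for r
  have "\<Phi> t \<le> \<Phi> a"
  proof (rule dini_deriv_open[where G=\<Phi> and G'="\<lambda>r. (p - 2) * (lam r - La)" and a=a and b=t])
    show "a \<le> t" by (rule a(2))
    have "continuous_on {a..t} (\<lambda>r. N r powr ((2 - p) / 2))"
      using N_cont[OF a(1), of t] nz N_pos by (intro continuous_intros) (auto simp: N_def)
    thus "continuous_on {a..t} \<Phi>" unfolding \<Phi>_def[abs_def]
      by (rule continuous_on_diff) (intro continuous_intros)
    fix r assume r: "r \<in> {a<..<t}"
    have r0: "r > 0" and ur: "u r \<noteq> 0" using r a nz by auto
    have d: "(\<Phi> has_real_derivative
        (((2 - p) / 2) * N r powr ((2 - p) / 2 - 1)) * (- 2 * p * g r) - (p - 2) * La * 1) (at r within {r..})"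
      unfolding \<Phi>_def[abs_def]
      by (intro DERIV_diff powr_N_der[OF r0 ur] DERIV_cmult) (auto intro!: derivative_eq_intros)
    have ex: "(2 - p) / 2 - 1 = - p / 2" by (simp add: field_simps)
    have "(((2 - p) / 2) * N r powr ((2 - p) / 2 - 1)) * (- 2 * p * g r) - (p - 2) * La * 1
        = (p - 2) * (p * g r * N r powr (- p / 2)) - (p - 2) * La"
      unfolding ex by (simp add: field_simps)
    also have "\<dots> = (p - 2) * (lam r - La)" by (simp add: lam_eq algebra_simps)
    finally have eq: "(((2 - p) / 2) * N r powr ((2 - p) / 2 - 1)) * (- 2 * p * g r) - (p - 2) * La * 1
        = (p - 2) * (lam r - La)" .
    show "(\<Phi> has_real_derivative (p - 2) * (lam r - La)) (at r within {r..})"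
      by (rule DERIV_cong[OF d eq])
    show "(p - 2) * (lam r - La) \<le> 0" using lb[of r] r p by (simp add: mult_nonneg_nonpos)
  qed
  moreover have "norm (u t) powr (2 - p) = N t powr ((2 - p) / 2)"
    unfolding N_def by (rule norm_powr_inner)
  moreover have "norm (u a) powr (2 - p) = N a powr ((2 - p) / 2)"
    unfolding N_def by (rule norm_powr_inner)
  ultimately show ?thesis unfolding \<Phi>_def by simp
qed


lemma lam_p2:
  assumes p: "p = 2" and ur: "u r \<noteq> 0"
  shows "lam r * N r = 2 * g r"
proof -
  have n: "N r > 0" using N_pos[OF ur] .
  have "N r powr (- p / 2) = N r powr (- 1)" using p by simp
  also have "\<dots> = inverse (N r)" using powr_minus[of "N r" 1] n by simp
  finally have "lam r = p * g r * inverse (N r)" by (simp add: lam_eq)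
  thus ?thesis using n p by simp
qed

lemma phi_eq2:
  assumes p: "p = 2" and a: "0 \<le> a" "a \<le> t" and nz: "\<And>s. s \<in> {a..t} \<Longrightarrow> u s \<noteq> 0"
    and lb: "\<And>s. s \<in> {a<..t} \<Longrightarrow> lam s \<le> La"
  shows "norm (u a)^2 * exp (- 2 * La * (t - a)) \<le> norm (u t)^2"
proof -
  define E where "E r = exp (2 * La * (r - a))" for r
  define \<Phi> where "\<Phi> r = - (N r * E r)" for r
  have "\<Phi> t \<le> \<Phi> a"
  proof (rule dini_deriv_open[where G=\<Phi> and G'="\<lambda>r. 2 * E r * N r * (lam r - La)" and a=a and b=t])
    show "a \<le> t" by (rule a(2))
    show "continuous_on {a..t} \<Phi>" unfolding \<Phi>_def[abs_def] E_def[abs_def]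
      by (intro continuous_intros N_cont[OF a(1)])
    fix r assume r: "r \<in> {a<..<t}"
    have r0: "r > 0" and ur: "u r \<noteq> 0" using r a nz by auto
    have de: "(E has_real_derivative E r * (2 * La)) (at r within {r..})"
      unfolding E_def[abs_def] by (auto intro!: derivative_eq_intros)
    have d: "(\<Phi> has_real_derivative - ((- 2 * p * g r) * E r + E r * (2 * La) * N r)) (at r within {r..})"
      unfolding \<Phi>_def[abs_def] by (intro DERIV_minus DERIV_mult N_der[OF r0] de)
    have ln: "lam r * N r = 2 * g r" by (rule lam_p2[OF p ur])
    have eq: "- ((- 2 * p * g r) * E r + E r * (2 * La) * N r) = 2 * E r * N r * (lam r - La)"
    proof -
      have "2 * E r * N r * (lam r - La) = 2 * E r * (lam r * N r) - 2 * E r * La * N r"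
        by (simp add: algebra_simps)
      also have "\<dots> = 2 * E r * (2 * g r) - 2 * E r * La * N r" by (simp only: ln)
      finally have e1: "2 * E r * N r * (lam r - La) = 2 * E r * (2 * g r) - 2 * E r * La * N r" .
      have e2: "- ((- 2 * p * g r) * E r + E r * (2 * La) * N r) = 2 * E r * (2 * g r) - 2 * E r * La * N r"
        unfolding p by (simp add: algebra_simps)
      show ?thesis unfolding e1 e2 ..
    qed
    show "(\<Phi> has_real_derivative 2 * E r * N r * (lam r - La)) (at r within {r..})"
      by (rule DERIV_cong[OF d eq])
    have "0 \<le> 2 * E r * N r" using N_nn by (simp add: E_def)
    moreover have "lam r - La \<le> 0" using lb[of r] r by simp
    ultimately show "2 * E r * N r * (lam r - La) \<le> 0" by (rule mult_nonneg_nonpos)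
  qed
  hence le: "N a \<le> N t * E t" by (simp add: \<Phi>_def E_def)
  have "N a * exp (- 2 * La * (t - a)) \<le> N t * E t * exp (- 2 * La * (t - a))"
    using le by (intro mult_right_mono) auto
  also have "\<dots> = N t" by (simp add: E_def mult.assoc flip: exp_add)
  finally show ?thesis by (simp add: N_def power2_norm_eq_inner)
qed


lemma lam_nn: "0 \<le> lam s"
  unfolding lam_def using p_pos g_nn by simp

lemma norm_powr_N: "norm (u s) powr q = N s powr (q / 2)"
  unfolding N_def by (rule norm_powr_inner)

lemma first_zero:
  assumes a: "0 \<le> a" and ua: "u a \<noteq> 0" and t: "t \<ge> a" and ut: "u t = 0"
  obtains T where "T > a" "u T = 0" "\<And>s. s \<in> {a..<T} \<Longrightarrow> u s \<noteq> 0"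
proof -
  define Z where "Z = {s \<in> {a..}. u s = 0}"
  have cl: "closed Z" unfolding Z_def
    by (rule continuous_closed_preimage_constant) (use continuous_on_subset[OF cont] a in auto)
  have ne: "Z \<noteq> {}" using t ut by (auto simp: Z_def)
  have bdd: "bdd_below Z" by (auto simp: Z_def bdd_below_def)
  define T where "T = Inf Z"
  have TZ: "T \<in> Z" unfolding T_def by (rule closed_contains_Inf[OF ne bdd cl])
  have Ta: "T \<ge> a" "u T = 0" using TZ by (auto simp: Z_def)
  have "T \<noteq> a" using Ta ua by auto
  hence T1: "T > a" using Ta by simp
  have "u s \<noteq> 0" if s: "s \<in> {a..<T}" for s
  proof
    assume "u s = 0"
    hence "s \<in> Z" using s by (auto simp: Z_def)
    hence "T \<le> s" unfolding T_def using bdd by (rule cInf_lower)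
    thus False using s by simp
  qed
  thus ?thesis using that T1 Ta by blast
qed

lemma nonzero_from:
  assumes eta: "\<eta> > 0" "u \<eta> \<noteq> 0" and t: "t \<ge> \<eta>"
  shows "u t \<noteq> 0"
proof
  assume ut: "u t = 0"
  obtain T where T: "T > \<eta>" "u T = 0" and nzT: "\<And>s. s \<in> {\<eta>..<T} \<Longrightarrow> u s \<noteq> 0"
    using first_zero[of \<eta> t] eta t ut by auto
  have lamb: "lam s' \<le> lam \<eta>" if "s' \<in> {\<eta><..s}" "s < T" for s s'
    using that eta by (intro lam_anti) (auto intro!: nzT)
  have nzs: "\<And>s'. s' \<in> {\<eta>..s} \<Longrightarrow> u s' \<noteq> 0" if "s < T" for s using that nzT by auto
  have "\<exists>m>0. \<forall>s\<in>{\<eta>..<T}. m \<le> N s"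
  proof (cases "p = 2")
    case True
    define m where "m = N \<eta> * exp (- 2 * lam \<eta> * (T - \<eta>))"
    have "m > 0" using N_pos[OF eta(2)] by (simp add: m_def)
    moreover have "m \<le> N s" if s: "s \<in> {\<eta>..<T}" for s
    proof -
      have "norm (u \<eta>)^2 * exp (- 2 * lam \<eta> * (s - \<eta>)) \<le> norm (u s)^2"
        using s eta by (intro phi_eq2[OF True, where La="lam \<eta>"] lamb nzs) auto
      moreover have "exp (- 2 * lam \<eta> * (T - \<eta>)) \<le> exp (- 2 * lam \<eta> * (s - \<eta>))"
        using s lam_nn[of \<eta>] by (simp add: mult_left_mono)
      ultimately show ?thesis unfolding m_def N_def power2_norm_eq_inner[symmetric]
        by (meson mult_left_mono order_trans zero_le_power2)
    qed
    ultimately show ?thesis by blast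
  next
    case False
    hence p3: "p > 2" using p2 by simp
    define B where "B = norm (u \<eta>) powr (2 - p) + (p - 2) * lam \<eta> * (T - \<eta>)"
    define c where "c = (2 - p) / 2"
    have c0: "c < 0" using p3 by (simp add: c_def)
    have B0: "B > 0"
    proof -
      have "norm (u \<eta>) powr (2 - p) > 0" using eta by simp
      moreover have "(p - 2) * lam \<eta> * (T - \<eta>) \<ge> 0" using p3 lam_nn[of \<eta>] T by simp
      ultimately show ?thesis unfolding B_def by (rule add_pos_nonneg)
    qed
    define m where "m = B powr (1 / c)"
    have "m > 0" using B0 by (simp add: m_def)
    moreover have "m \<le> N s" if s: "s \<in> {\<eta>..<T}" for s
    proof -
      have "norm (u s) powr (2 - p) \<le> norm (u \<eta>) powr (2 - p) + (p - 2) * lam \<eta> * (s - \<eta>)"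
        using s eta by (intro phi_gt2[OF p3, where La="lam \<eta>"] lamb nzs) auto
      also have "\<dots> \<le> B" unfolding B_def using s p3 lam_nn[of \<eta>] by (simp add: mult_left_mono)
      finally have "N s powr c \<le> B" by (simp add: norm_powr_N c_def)
      moreover have Ns: "N s > 0" using nzT[OF s] by (rule N_pos)
      ultimately have "B powr (1 / c) \<le> (N s powr c) powr (1 / c)"
        using c0 by (intro powr_mono2') auto
      also have "\<dots> = N s" using c0 Ns by (simp add: powr_powr)
      finally show ?thesis by (simp add: m_def)
    qed
    ultimately show ?thesis by blast
  qed
  then obtain m where m: "m > 0" "\<And>s. s \<in> {\<eta>..<T} \<Longrightarrow> m \<le> N s" by blast
  have T0: "T > 0" using T eta by simp
  have "(N \<longlongrightarrow> N T) (at_left T)" unfolding N_def[abs_def] by (intro tendsto_intros u_lim[OF T0])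
  moreover have "\<forall>\<^sub>F s in at_left T. m \<le> N s"
    using eventually_at_left_real[OF T(1)] by eventually_elim (auto intro: m(2))
  ultimately have "m \<le> N T" by (intro tendsto_lowerbound) auto
  thus False using m T by (simp add: N_def)
qed

lemma nonzero_all:
  assumes u0: "u 0 \<noteq> 0" and t: "t \<ge> 0"
  shows "u t \<noteq> 0"
proof
  assume ut: "u t = 0"
  obtain T where T: "T > 0" "u T = 0" and nzT: "\<And>s. s \<in> {0..<T} \<Longrightarrow> u s \<noteq> 0"
    using first_zero[of 0 t] u0 t ut by auto
  have "u (T / 2) \<noteq> 0" by (rule nzT) (use T in auto)
  hence "u T \<noteq> 0" by (rule nonzero_from[of "T/2", rotated]) (use T in auto)
  thus False using T by simp
qed


lemma u_lim0: "(u \<longlongrightarrow> u 0) (at_right 0)"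
proof -
  have "(u \<longlongrightarrow> u 0) (at 0 within {0..})" using cont by (simp add: continuous_on_def)
  thus ?thesis by (simp add: at_within_Ici_at_right)
qed

lemma g_le_J0:
  assumes c: "J (u 0) = ereal c" and e: "\<epsilon> > 0"
  shows "g \<epsilon> \<le> c"
proof -
  define F where "F \<eta> r = (1/2) * ((u r - u 0) \<bullet> (u r - u 0)) - (r - \<eta>) * (c - g \<epsilon>)" for \<eta> r
  have Fle: "F \<eta> \<epsilon> \<le> F \<eta> \<eta>" if eta: "\<eta> \<in> {0<..<\<epsilon>}" for \<eta>
  proof (rule dini_deriv[where G="F \<eta>" and a=\<eta> and b=\<epsilon>
        and G'="\<lambda>r. (1/2) * (2 * ((u r - u 0) \<bullet> - z r)) - 1 * (c - g \<epsilon>)"])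
    show "\<eta> \<le> \<epsilon>" using eta by simp
    show "continuous_on {\<eta>..\<epsilon>} (F \<eta>)" unfolding F_def
      using eta by (intro continuous_intros u_cont_on) auto
    fix r assume r: "r \<in> {\<eta>..<\<epsilon>}"
    have r0: "r > 0" using r eta by simp
    have "((\<lambda>r. u r - u 0) has_vector_derivative - z r) (at r within {r..})"
      using u_der[OF r0] by (simp add: has_vector_derivative_diff_const)
    from inner_self_vd[OF this]
    have "((\<lambda>r. (u r - u 0) \<bullet> (u r - u 0)) has_real_derivative 2 * ((u r - u 0) \<bullet> - z r)) (at r within {r..})"
      by simp
    thus "(F \<eta> has_real_derivative (1/2) * (2 * ((u r - u 0) \<bullet> - z r)) - 1 * (c - g \<epsilon>)) (at r within {r..})"
      unfolding F_def by (intro DERIV_diff DERIV_cmult DERIV_mult') (auto intro!: derivative_eq_intros)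
    have "ereal (g r + inner (z r) (u 0 - u r)) \<le> J (u 0)" by (rule sub_t[OF r0])
    hence s1: "g r + inner (z r) (u 0 - u r) \<le> c" using c by simp
    have s2: "(u r - u 0) \<bullet> - z r = inner (z r) (u 0 - u r)"
      by (simp add: inner_commute inner_diff_left inner_diff_right)
    have s3: "g \<epsilon> \<le> g r" using r r0 by (intro g_anti) auto
    show "(1/2) * (2 * ((u r - u 0) \<bullet> - z r)) - 1 * (c - g \<epsilon>) \<le> 0"
      using s1 s2 s3 by simp
  qed
  have lim1: "((\<lambda>\<eta>. F \<eta> \<epsilon>) \<longlongrightarrow> (1/2) * ((u \<epsilon> - u 0) \<bullet> (u \<epsilon> - u 0)) - (\<epsilon> - 0) * (c - g \<epsilon>)) (at_right 0)"
    unfolding F_def by (intro tendsto_intros)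
  have lim2: "((\<lambda>\<eta>. F \<eta> \<eta>) \<longlongrightarrow> (1/2) * ((u 0 - u 0) \<bullet> (u 0 - u 0)) - (0 - 0) * (c - g \<epsilon>)) (at_right 0)"
    unfolding F_def by (intro tendsto_intros u_lim0)
  have "(1/2) * ((u \<epsilon> - u 0) \<bullet> (u \<epsilon> - u 0)) - (\<epsilon> - 0) * (c - g \<epsilon>)
      \<le> (1/2) * ((u 0 - u 0) \<bullet> (u 0 - u 0)) - (0 - 0) * (c - g \<epsilon>)"
  proof (rule tendsto_le[OF _ lim2 lim1])
    show "at_right (0::real) \<noteq> bot" by simp
    show "\<forall>\<^sub>F \<eta> in at_right 0. F \<eta> \<epsilon> \<le> F \<eta> \<eta>"
      using eventually_at_right_real[OF e] by eventually_elim (rule Fle)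
  qed
  hence "\<epsilon> * (c - g \<epsilon>) \<ge> (1/2) * ((u \<epsilon> - u 0) \<bullet> (u \<epsilon> - u 0))" by simp
  moreover have "(u \<epsilon> - u 0) \<bullet> (u \<epsilon> - u 0) \<ge> 0" by simp
  ultimately have "\<epsilon> * (c - g \<epsilon>) \<ge> 0" by linarith
  thus ?thesis using e by (simp add: zero_le_mult_iff)
qed

lemma lam_le_0:
  assumes u0: "u 0 \<noteq> 0" and c: "J (u 0) = ereal c" and s: "s > 0"
  shows "lam s \<le> lam 0"
proof -
  have g0: "g 0 = c" using c by (simp add: g_def)
  have b: "lam s \<le> p * c * N \<eta> powr (- p / 2)" if eta: "\<eta> \<in> {0<..<s}" for \<eta>
  proof -
    have "lam s \<le> lam \<eta>" using eta by (intro lam_anti nonzero_all[OF u0]) auto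
    also have "\<dots> = p * g \<eta> * N \<eta> powr (- p / 2)" by (rule lam_eq)
    also have "\<dots> \<le> p * c * N \<eta> powr (- p / 2)"
      using g_le_J0[OF c, of \<eta>] eta p_pos by (intro mult_right_mono mult_left_mono) auto
    finally show ?thesis .
  qed
  have "(N \<longlongrightarrow> N 0) (at_right 0)" unfolding N_def[abs_def] by (intro tendsto_intros u_lim0)
  hence lim: "((\<lambda>\<eta>. p * c * N \<eta> powr (- p / 2)) \<longlongrightarrow> p * c * N 0 powr (- p / 2)) (at_right 0)"
    using N_pos[OF u0] by (intro tendsto_intros) auto
  have "lam s \<le> p * c * N 0 powr (- p / 2)"
  proof (rule tendsto_lowerbound[OF lim])
    show "\<forall>\<^sub>F \<eta> in at_right 0. lam s \<le> p * c * N \<eta> powr (- p / 2)"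
      using eventually_at_right_real[OF s] by eventually_elim (rule b)
  qed simp
  also have "\<dots> = lam 0" by (simp add: lam_eq g0)
  finally show ?thesis .
qed

end

theorem corollary2:
  fixes J :: "'a::{real_inner, complete_space} \<Rightarrow> ereal"
    and p :: real and f :: 'a and u :: "real \<Rightarrow> 'a" and \<delta> t :: real
  assumes conv: "convex_functional J"
    and lsc: "lsc_functional J"
    and proper: "proper_functional J"
    and dense: "closure (eff_dom J) = UNIV"
    and hom: "abs_homogeneous p J"
    and coerc: "lambda1 p J > 0"
    and p2: "p \<ge> 2"
    and fH0: "f \<in> H0 J"
    and flow: "gradient_flow J f u"
    and delta: "\<delta> > 0 \<or> (\<delta> = 0 \<and> J f < \<infinity>)"
    and tge: "t \<ge> \<delta>"
  shows "(p = 2 \<longrightarrow>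
            norm (u t) ^ 2 \<ge> norm (u \<delta>) ^ 2 * exp (- 2 * rayleigh p J u \<delta> * (t - \<delta>)))
       \<and> (p > 2 \<longrightarrow>
            norm (u t) powr (p - 2) \<ge>
              1 / (norm (u \<delta>) powr (2 - p) + (p - 2) * rayleigh p J u \<delta> * (t - \<delta>)))"
proof -
  have cont: "continuous_on {0..} u" and lip: "\<forall>\<delta>>0. \<exists>C. C-lipschitz_on {\<delta>..} u"
    and u0: "u 0 = f"
    and der: "\<forall>t>0. \<exists>\<zeta>. min_norm_elem (subdiff J (u t)) \<zeta> \<and> (u has_vector_derivative (- \<zeta>)) (at t within {t..})"
    using flow unfolding gradient_flow_def by auto
  interpret F: flowctx J p u
    by (rule flowctx.intro) (fact conv lsc proper hom p2 cont lip der)+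
  have ray: "rayleigh p J u s = F.lam s" for s by (simp add: rayleigh_def F.lam_def F.g_def)
  have f0: "f \<noteq> 0" using fH0 by (simp add: H0_def)
  have u0nz: "u 0 \<noteq> 0" using f0 u0 by simp
  have d0: "\<delta> \<ge> 0" using delta by auto
  have nz: "\<And>s. s \<in> {\<delta>..t} \<Longrightarrow> u s \<noteq> 0" using d0 by (intro F.nonzero_all[OF u0nz]) auto
  have lb: "F.lam s \<le> F.lam \<delta>" if s: "s \<in> {\<delta><..t}" for s
  proof (cases "\<delta> > 0")
    case True
    thus ?thesis using s nz by (intro F.lam_anti) auto
  next
    case False
    hence dz: "\<delta> = 0" and Jf: "J f < \<infinity>" using delta by auto
    have "0 \<le> J f" by (rule F.J_nn)
    then obtain c where c: "J (u 0) = ereal c" using Jf u0 by (cases "J f") auto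
    show ?thesis unfolding dz by (rule F.lam_le_0[OF u0nz c]) (use s dz in simp)
  qed
  show ?thesis
  proof (intro conjI impI)
    assume p: "p = 2"
    show "norm (u \<delta>) ^ 2 * exp (- 2 * rayleigh p J u \<delta> * (t - \<delta>)) \<le> norm (u t) ^ 2"
      unfolding ray by (rule F.phi_eq2[OF p d0 tge nz lb])
  next
    assume p: "p > 2"
    have X: "norm (u t) powr (2 - p) \<le> norm (u \<delta>) powr (2 - p) + (p - 2) * F.lam \<delta> * (t - \<delta>)"
      by (rule F.phi_gt2[OF p d0 tge nz lb])
    have Xp: "norm (u t) powr (2 - p) > 0" using nz[of t] tge by simp
    have eq: "norm (u t) powr (p - 2) = 1 / norm (u t) powr (2 - p)"
      using powr_minus_divide[of "norm (u t)" "2 - p"] by simp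
    show "1 / (norm (u \<delta>) powr (2 - p) + (p - 2) * rayleigh p J u \<delta> * (t - \<delta>)) \<le> norm (u t) powr (p - 2)"
      unfolding ray eq
    proof (rule divide_left_mono[OF X])
      have "0 < norm (u \<delta>) powr (2 - p) + (p - 2) * F.lam \<delta> * (t - \<delta>)" using X Xp by linarith
      thus "0 < (norm (u \<delta>) powr (2 - p) + (p - 2) * F.lam \<delta> * (t - \<delta>)) * norm (u t) powr (2 - p)"
        using Xp by (rule mult_pos_pos)
    qed simp
  qed
qed

end
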